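(* For every integer $n\ge 2$, the lattice $M_n$ is a Shannon lattice.
   Context: $M_n$ is the lattice consisting of a smallest element, a largest element, and $n-2$ pairwise incomparable elements lying strictly between them. Lattices have order $\supseteq$, meet $\cap$, join $\uplus$. A polymatroid function on a finite lattice $L$ is $h:L\to\mathbb{R}$ that is non-negative, increasing ($x\supseteq y\Rightarrow h(x)\ge h(y)$) and submodular ($h(x)+h(y)\ge h(x\uplus y)+h(x\cap y)$). $h$ is entropic if there exist jointly distributed discrete random variables $(X_x)_{x\in L}$ such that for all $x,y$ the variable $X_{x\uplus y}$ and the pair $(X_x,X_y)$ are functions of each other, and $h(x)=H(X_x)$ (Shannon entropy) for all $x$. $L$ is a Shannon lattice if the set of polymatroid functions on $L$ equals the closure in $\mathbb{R}^L$ of the set of entropic functions on $L$. *)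

theory Defs
  imports "HOL-Probability.Probability"
begin

text \<open>The lattice M_n, n >= 2, on the carrier {0..<n}: element 0 is the least
  element, element 1 the greatest, and 2, ..., n-1 are the n-2 pairwise
  incomparable middle elements.\<close>

definition Mn_carrier :: "nat \<Rightarrow> nat set" where
  "Mn_carrier n = {0..<n}"

definition Mn_le :: "nat \<Rightarrow> nat \<Rightarrow> bool" where
  "Mn_le x y \<longleftrightarrow> x = y \<or> x = 0 \<or> y = 1"

definition Mn_join :: "nat \<Rightarrow> nat \<Rightarrow> nat" where
  "Mn_join x y = (if x = y then x else if x = 0 then y else if y = 0 then x else 1)"

definition Mn_meet :: "nat \<Rightarrow> nat \<Rightarrow> nat" where
  "Mn_meet x y = (if x = y then x else if x = 1 then y else if y = 1 then x else 0)"

definition polymatroid :: "nat \<Rightarrow> (nat \<Rightarrow> real) \<Rightarrow> bool" where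
  "polymatroid n h \<longleftrightarrow>
     (\<forall>x\<in>Mn_carrier n. 0 \<le> h x) \<and>
     (\<forall>x\<in>Mn_carrier n. \<forall>y\<in>Mn_carrier n. Mn_le y x \<longrightarrow> h y \<le> h x) \<and>
     (\<forall>x\<in>Mn_carrier n. \<forall>y\<in>Mn_carrier n.
        h x + h y \<ge> h (Mn_join x y) + h (Mn_meet x y))"

definition has_entropy :: "'w pmf \<Rightarrow> ('w \<Rightarrow> nat) \<Rightarrow> real \<Rightarrow> bool" where
  "has_entropy p X r \<longleftrightarrow>
     ((\<lambda>v. - (measure_pmf.prob p {w. X w = v}) * log 2 (measure_pmf.prob p {w. X w = v}))
        has_sum r) UNIV"

text \<open>Entropic functions on M_n: jointly distributed discrete random variables
  (X_x) for x in M_n (the joint outcome is a function nat => nat; X_x w = w x),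
  such that X_(x join y) and (X_x, X_y) are (almost surely) functions of each other,
  and h x = H(X_x).\<close>

definition entropic :: "nat \<Rightarrow> (nat \<Rightarrow> real) \<Rightarrow> bool" where
  "entropic n h \<longleftrightarrow>
     (\<exists>p :: (nat \<Rightarrow> nat) pmf.
        (\<forall>x\<in>Mn_carrier n. \<forall>y\<in>Mn_carrier n.
           (\<exists>f g. \<forall>w\<in>set_pmf p.
              w (Mn_join x y) = f (w x, w y) \<and> (w x, w y) = g (w (Mn_join x y)))) \<and>
        (\<forall>x\<in>Mn_carrier n. has_entropy p (\<lambda>w. w x) (h x)))"

text \<open>Closure in R^L of the entropic functions: since L is finite, this is the set of
  pointwise limits (on L) of sequences of entropic functions.\<close>

definition entropic_closure :: "nat \<Rightarrow> (nat \<Rightarrow> real) \<Rightarrow> bool" where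
  "entropic_closure n h \<longleftrightarrow>
     (\<exists>hs :: nat \<Rightarrow> nat \<Rightarrow> real. (\<forall>k. entropic n (hs k)) \<and>
        (\<forall>x\<in>Mn_carrier n. (\<lambda>k. hs k x) \<longlonglongrightarrow> h x))"

definition Shannon_lattice_Mn :: "nat \<Rightarrow> bool" where
  "Shannon_lattice_Mn n \<longleftrightarrow> (\<forall>h. polymatroid n h \<longleftrightarrow> entropic_closure n h)"

end

theory Submission
  imports Defs "HOL-Number_Theory.Cong" "HOL-Computational_Algebra.Primes" "HOL-Real_Asymp.Real_Asymp"
begin

definition NE :: "'a pmf \<Rightarrow> ennreal" where
  "NE q = (\<integral>\<^sup>+ v. ennreal (- log 2 (pmf q v)) \<partial>measure_pmf q)"

lemma has_sum_nonneg_iff_nn: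
  fixes f :: "'a::countable \<Rightarrow> real"
  assumes nn: "\<And>x. f x \<ge> 0"
  shows "(f has_sum r) UNIV \<longleftrightarrow> (\<integral>\<^sup>+x. ennreal (f x) \<partial>count_space UNIV) = ennreal r \<and> r \<ge> 0"
proof
  assume h: "(f has_sum r) UNIV"
  have r0: "r \<ge> 0" using has_sum_nonneg[OF h] nn by auto
  have s: "f summable_on UNIV" using h by (auto simp: summable_on_def)
  hence "(\<lambda>x. norm (f x)) summable_on UNIV" using nn by simp
  hence a: "Infinite_Set_Sum.abs_summable_on f UNIV"
    using abs_summable_equivalent by blast
  have "(\<integral>\<^sup>+x. ennreal (f x) \<partial>count_space UNIV) = ennreal (infsetsum f UNIV)"
    using nn_integral_conv_infsetsum[OF a] nn by auto
  also have "infsetsum f UNIV = infsum f UNIV" using infsetsum_infsum[OF a] .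
  also have "\<dots> = r" using h by (rule infsumI)
  finally show "(\<integral>\<^sup>+x. ennreal (f x) \<partial>count_space UNIV) = ennreal r \<and> r \<ge> 0" using r0 by simp
next
  assume h: "(\<integral>\<^sup>+x. ennreal (f x) \<partial>count_space UNIV) = ennreal r \<and> r \<ge> 0"
  have i: "integrable (count_space UNIV) f"
    by (rule integrableI_nonneg) (use h nn in auto)
  hence a: "Infinite_Set_Sum.abs_summable_on f UNIV" by (simp add: abs_summable_on_def)
  hence "(\<lambda>x. norm (f x)) summable_on UNIV" using abs_summable_equivalent by blast
  hence s: "f summable_on UNIV" using nn by simp
  have "infsum f UNIV = infsetsum f UNIV" using infsetsum_infsum[OF a] by simp
  also have "\<dots> = enn2real (\<integral>\<^sup>+x. ennreal (f x) \<partial>count_space UNIV)"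
    by (rule infsetsum_conv_nn_integral) (use h nn in auto)
  also have "\<dots> = r" using h by simp
  finally show "(f has_sum r) UNIV" using s by (metis has_sum_infsum)
qed

lemma mlog_nonneg: "0 \<le> (x::real) \<Longrightarrow> x \<le> 1 \<Longrightarrow> 0 \<le> - log 2 x"
  by (cases "x > 0") (auto simp: log_def divide_nonpos_pos ln_le_zero_iff)

definition Ent :: "'a::countable pmf \<Rightarrow> real \<Rightarrow> bool" where
  "Ent q r \<longleftrightarrow> ((\<lambda>v. - pmf q v * log 2 (pmf q v)) has_sum r) UNIV"

lemma Ent_iff: "Ent q r \<longleftrightarrow> NE q = ennreal r \<and> r \<ge> 0"
proof -
  have nn: "\<And>v. - pmf q v * log 2 (pmf q v) \<ge> 0"
    using mlog_nonneg[OF pmf_nonneg pmf_le_1] by (metis minus_mult_left mult_nonneg_nonneg pmf_nonneg mult_minus_right)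
  have "(\<integral>\<^sup>+x. ennreal (- pmf q x * log 2 (pmf q x)) \<partial>count_space UNIV) = NE q"
    unfolding NE_def nn_integral_measure_pmf
    by (intro nn_integral_cong) (simp add: ennreal_mult'[symmetric])
  thus ?thesis unfolding Ent_def has_sum_nonneg_iff_nn[OF nn] by simp
qed

lemma has_entropy_Ent: "has_entropy p X r \<longleftrightarrow> Ent (map_pmf X p) r"
  unfolding has_entropy_def Ent_def pmf_map by (simp add: vimage_def)

lemma pmf_le_pmf_map: "pmf q v \<le> pmf (map_pmf f q) (f v)"
proof -
  have "pmf q v = measure q {v}" by (simp add: measure_pmf_single)
  also have "\<dots> \<le> measure q (f -` {f v})"
    by (rule measure_pmf.finite_measure_mono) auto
  finally show ?thesis by (simp add: pmf_map)
qed

lemma log_mono_pos: "0 < (x::real) \<Longrightarrow> x \<le> y \<Longrightarrow> log 2 x \<le> log 2 y"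
  by simp

lemma NE_map_le: "NE (map_pmf f q) \<le> NE q"
proof -
  have "NE (map_pmf f q) = (\<integral>\<^sup>+ v. ennreal (- log 2 (pmf (map_pmf f q) (f v))) \<partial>measure_pmf q)"
    unfolding NE_def by simp
  also have "\<dots> \<le> NE q" unfolding NE_def
  proof (rule nn_integral_mono_AE)
    show "AE x in measure_pmf q. ennreal (- log 2 (pmf (map_pmf f q) (f x))) \<le> ennreal (- log 2 (pmf q x))"
      using AE_measure_pmf[of q]
    proof eventually_elim
      case (elim x)
      have "0 < pmf q x" using elim by (simp add: pmf_positive)
      hence "log 2 (pmf q x) \<le> log 2 (pmf (map_pmf f q) (f x))"
        using pmf_le_pmf_map[of q x f] by simp
      thus ?case by (intro ennreal_leI) simp
    qed
  qed
  finally show ?thesis .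
qed

lemma NE_map_le_supp:
  assumes "\<And>w. w \<in> set_pmf p \<Longrightarrow> A w = f (B w)"
  shows "NE (map_pmf A p) \<le> NE (map_pmf B p)"
proof -
  have "map_pmf A p = map_pmf f (map_pmf B p)"
    unfolding map_pmf_comp by (rule map_pmf_cong) (use assms in auto)
  thus ?thesis using NE_map_le by metis
qed

lemma NE_submod:
  fixes J :: "('a \<times> 'b) pmf" and f :: "'a \<Rightarrow> 'c" and g :: "'b \<Rightarrow> 'c"
  assumes fg: "\<And>v. v \<in> set_pmf J \<Longrightarrow> f (fst v) = g (snd v)"
  shows "NE J + NE (map_pmf (\<lambda>v. f (fst v)) J) \<le> NE (map_pmf fst J) + NE (map_pmf snd J)"
proof -
  define PX where "PX = map_pmf fst J"
  define PY where "PY = map_pmf snd J"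
  define PZ where "PZ = map_pmf (\<lambda>v. f (fst v)) J"
  define a where "a v = pmf PX (fst v)" for v :: "'a \<times> 'b"
  define b where "b v = pmf PY (snd v)" for v :: "'a \<times> 'b"
  define c where "c v = pmf J v" for v :: "'a \<times> 'b"
  define d where "d v = pmf PZ (f (fst v))" for v :: "'a \<times> 'b"
  define t where "t v = a v * b v / (c v * d v)" for v :: "'a \<times> 'b"
  define K :: ennreal where "K = ennreal (1 / ln 2)"
  have PZg: "map_pmf g PY = PZ"
    unfolding PY_def PZ_def map_pmf_comp by (rule map_pmf_cong) (use fg in auto)
  have pos: "0 < c v" "c v \<le> a v" "c v \<le> b v" "c v \<le> d v" if "v \<in> set_pmf J" for v :: "'a \<times> 'b"
    using that pmf_le_pmf_map[of J v fst] pmf_le_pmf_map[of J v snd]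
      pmf_le_pmf_map[of J v "\<lambda>v. f (fst v)"]
    by (auto simp: c_def a_def b_def d_def PX_def PY_def PZ_def pmf_positive)
  have pw: "ennreal (- log 2 (c v)) + ennreal (- log 2 (d v)) + K
      \<le> ennreal (- log 2 (a v)) + ennreal (- log 2 (b v)) + K * ennreal (t v)"
    if v: "v \<in> set_pmf J" for v :: "'a \<times> 'b"
  proof -
    note p = pos[OF v]
    have c1: "c v \<le> 1" "d v \<le> 1" "a v \<le> 1" "b v \<le> 1"
      by (auto simp: a_def b_def c_def d_def pmf_le_1)
    have tpos: "t v > 0" using p unfolding t_def by simp
    have lt: "log 2 (t v) = log 2 (a v) + log 2 (b v) - log 2 (c v) - log 2 (d v)"
      using p unfolding t_def by (simp add: log_divide log_mult)
    have "ln (t v) \<le> t v - 1" using tpos by (rule ln_le_minus_one)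
    hence "log 2 (t v) \<le> (t v - 1) / ln 2" by (simp add: log_def divide_right_mono)
    hence real: "- log 2 (c v) + - log 2 (d v) + 1 / ln 2 \<le> - log 2 (a v) + - log 2 (b v) + 1 / ln 2 * t v"
      using lt by (simp add: diff_divide_distrib)
    have nn: "0 \<le> - log 2 (c v)" "0 \<le> - log 2 (d v)" "0 \<le> - log 2 (a v)" "0 \<le> - log 2 (b v)"
      using c1 p by (auto intro!: mlog_nonneg)
    have "ennreal (- log 2 (c v)) + ennreal (- log 2 (d v)) + K = ennreal (- log 2 (c v) + - log 2 (d v) + 1 / ln 2)"
      using nn unfolding K_def by (simp add: flip: ennreal_plus)
    also have "\<dots> \<le> ennreal (- log 2 (a v) + - log 2 (b v) + 1 / ln 2 * t v)"
      using real by (rule ennreal_leI)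
    also have "\<dots> = ennreal (- log 2 (a v)) + ennreal (- log 2 (b v)) + K * ennreal (t v)"
      using nn tpos unfolding K_def by (simp add: flip: ennreal_plus ennreal_mult)
    finally show ?thesis .
  qed
  have int_t: "(\<integral>\<^sup>+ v. ennreal (t v) \<partial>J) \<le> 1"
  proof -
    have "(\<integral>\<^sup>+ v. ennreal (t v) \<partial>J) = (\<integral>\<^sup>+ v. ennreal (c v) * ennreal (t v) \<partial>count_space UNIV)"
      by (simp add: nn_integral_measure_pmf c_def)
    also have "\<dots> \<le> (\<integral>\<^sup>+ v. ennreal (pmf (pair_pmf PX PY) v) *
        (if f (fst v) = g (snd v) then ennreal (1 / pmf PZ (f (fst v))) else 0) \<partial>count_space UNIV)"
    proof (rule nn_integral_mono)
      fix v :: "'a \<times> 'b"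
      show "ennreal (c v) * ennreal (t v) \<le> ennreal (pmf (pair_pmf PX PY) v) *
        (if f (fst v) = g (snd v) then ennreal (1 / pmf PZ (f (fst v))) else 0)"
      proof (cases "v \<in> set_pmf J")
        case True
        note p = pos[OF True]
        have "ennreal (c v) * ennreal (t v) = ennreal (c v * t v)"
          using p unfolding t_def by (subst ennreal_mult) auto
        also have "c v * t v = a v * b v * (1 / d v)" using p unfolding t_def by simp
        also have "ennreal \<dots> = ennreal (pmf (pair_pmf PX PY) v) *
          (if f (fst v) = g (snd v) then ennreal (1 / pmf PZ (f (fst v))) else 0)"
          using fg[OF True] p by (cases v) (simp add: pmf_pair a_def b_def d_def flip: ennreal_mult)
        finally show ?thesis by simp
      next
        case False
        hence "c v = 0" by (simp add: c_def set_pmf_iff)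
        thus ?thesis by simp
      qed
    qed
    also have "\<dots> = (\<integral>\<^sup>+ v. (if f (fst v) = g (snd v) then ennreal (1 / pmf PZ (f (fst v))) else 0) \<partial>pair_pmf PX PY)"
      by (simp add: nn_integral_measure_pmf)
    also have "\<dots> = (\<integral>\<^sup>+ x. \<integral>\<^sup>+ y. (if f x = g y then ennreal (1 / pmf PZ (f x)) else 0) \<partial>PY \<partial>PX)"
      by (simp add: nn_integral_pair_pmf' cong: if_cong)
    also have "\<dots> \<le> (\<integral>\<^sup>+ x. 1 \<partial>PX)"
    proof (rule nn_integral_mono_AE)
      show "AE x in measure_pmf PX. (\<integral>\<^sup>+ y. (if f x = g y then ennreal (1 / pmf PZ (f x)) else 0) \<partial>PY) \<le> 1"
        using AE_measure_pmf[of PX]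
      proof eventually_elim
        case (elim x)
        have "(\<integral>\<^sup>+ y. (if f x = g y then ennreal (1 / pmf PZ (f x)) else 0) \<partial>PY)
           = (\<integral>\<^sup>+ z. (if f x = z then ennreal (1 / pmf PZ (f x)) else 0) \<partial>map_pmf g PY)"
          by simp
        also have "\<dots> = (\<integral>\<^sup>+ z. ennreal (1 / pmf PZ (f x)) * indicator {f x} z \<partial>PZ)"
          unfolding PZg by (intro nn_integral_cong) (auto simp: indicator_def)
        also have "\<dots> = ennreal (1 / pmf PZ (f x)) * ennreal (pmf PZ (f x))"
          by (simp add: nn_integral_cmult_indicator emeasure_pmf_single)
        also have "\<dots> \<le> 1"
          by (cases "pmf PZ (f x) = 0") (auto simp: ennreal_mult[symmetric])
        finally show ?case .
      qed
    qed
    also have "\<dots> = 1" by simp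
    finally show ?thesis .
  qed
  have "NE J + NE PZ + K = (\<integral>\<^sup>+ v. ennreal (- log 2 (c v)) + ennreal (- log 2 (d v)) + K \<partial>J)"
    by (simp add: nn_integral_add NE_def c_def d_def PZ_def)
  also have "\<dots> \<le> (\<integral>\<^sup>+ v. ennreal (- log 2 (a v)) + ennreal (- log 2 (b v)) + K * ennreal (t v) \<partial>J)"
    by (rule nn_integral_mono_AE) (use AE_measure_pmf[of J] pw in \<open>auto elim: eventually_mono\<close>)
  also have "\<dots> = NE PX + NE PY + K * (\<integral>\<^sup>+ v. ennreal (t v) \<partial>J)"
    by (simp add: nn_integral_add nn_integral_cmult NE_def a_def b_def PX_def PY_def)
  also have "\<dots> \<le> NE PX + NE PY + K"
    using int_t by (intro add_left_mono) (metis mult.right_neutral mult_left_mono zero_le)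
  finally have "NE J + NE PZ + K \<le> NE PX + NE PY + K" .
  hence "NE J + NE PZ \<le> NE PX + NE PY"
    using ennreal_add_left_cancel_le[of K "NE J + NE PZ" "NE PX + NE PY"]
    unfolding K_def by (simp add: add.commute del: ennreal_plus)
  thus ?thesis unfolding PX_def PY_def PZ_def .
qed

lemma ennreal_le_real: "0 \<le> y \<Longrightarrow> ennreal x \<le> ennreal y \<Longrightarrow> x \<le> y"
  by (auto simp: ennreal_le_iff2)

lemma entropic_polymatroid:
  assumes n: "n \<ge> 2" and e: "entropic n h"
  shows "polymatroid n h"
proof -
  obtain p :: "(nat \<Rightarrow> nat) pmf" where
    det0: "\<forall>x\<in>Mn_carrier n. \<forall>y\<in>Mn_carrier n. (\<exists>f g. \<forall>w\<in>set_pmf p.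
           w (Mn_join x y) = f (w x, w y) \<and> (w x, w y) = g (w (Mn_join x y)))" and
    ent0: "\<forall>x\<in>Mn_carrier n. has_entropy p (\<lambda>w. w x) (h x)"
    using e unfolding entropic_def by (elim exE conjE) 
  have det: "\<exists>f g. \<forall>w\<in>set_pmf p.
           w (Mn_join x y) = f (w x, w y) \<and> (w x, w y) = g (w (Mn_join x y))"
    if "x \<in> Mn_carrier n" "y \<in> Mn_carrier n" for x y
    using det0 that by blast
  have ent: "has_entropy p (\<lambda>w. w x) (h x)" if "x \<in> Mn_carrier n" for x
    using ent0 that by blast
  define E where "E x = NE (map_pmf (\<lambda>w. w x) p)" for x
  have E: "E x = ennreal (h x)" "h x \<ge> 0" if "x \<in> Mn_carrier n" for x
    using ent[OF that] unfolding has_entropy_Ent Ent_iff E_def by auto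
  have C01: "0 \<in> Mn_carrier n" "1 \<in> Mn_carrier n" using n by (auto simp: Mn_carrier_def)
  have dep: "E x \<le> E y" if xy: "x \<in> Mn_carrier n" "y \<in> Mn_carrier n" "Mn_join x y = y" for x y
  proof -
    obtain f g where fg: "\<forall>w\<in>set_pmf p. w (Mn_join x y) = f (w x, w y) \<and> (w x, w y) = g (w (Mn_join x y))"
      using det[OF xy(1,2)] by blast
    have "\<forall>w\<in>set_pmf p. w x = fst (g (w y))" using fg xy(3) by (metis fst_conv)
    thus ?thesis unfolding E_def by (intro NE_map_le_supp) auto
  qed
  have mono: "h y \<le> h x" if "x \<in> Mn_carrier n" "y \<in> Mn_carrier n" "Mn_le y x" for x y
  proof -
    have "Mn_join y x = x" using that(3) by (auto simp: Mn_le_def Mn_join_def)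
    hence "E y \<le> E x" using dep that by blast
    thus ?thesis using E that by (metis ennreal_le_real)
  qed
  have sub: "h x + h y \<ge> h (Mn_join x y) + h (Mn_meet x y)"
    if xc: "x \<in> Mn_carrier n" and yc: "y \<in> Mn_carrier n" for x y
  proof (cases "x = y \<or> x = 0 \<or> y = 0 \<or> x = 1 \<or> y = 1")
    case True
    thus ?thesis by (auto simp: Mn_join_def Mn_meet_def)
  next
    case False
    hence jm: "Mn_join x y = 1" "Mn_meet x y = 0" by (auto simp: Mn_join_def Mn_meet_def)
    obtain f1 g1 where fg1: "\<forall>w\<in>set_pmf p. w (Mn_join 0 x) = f1 (w 0, w x) \<and> (w 0, w x) = g1 (w (Mn_join 0 x))"
      using det[OF C01(1) xc] by blast
    obtain f2 g2 where fg2: "\<forall>w\<in>set_pmf p. w (Mn_join 0 y) = f2 (w 0, w y) \<and> (w 0, w y) = g2 (w (Mn_join 0 y))"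
      using det[OF C01(1) yc] by blast
    obtain f3 g3 where fg3: "\<forall>w\<in>set_pmf p. w (Mn_join x y) = f3 (w x, w y) \<and> (w x, w y) = g3 (w (Mn_join x y))"
      using det[OF xc yc] by blast
    have fg3': "w 1 = f3 (w x, w y) \<and> (w x, w y) = g3 (w 1)" if "w \<in> set_pmf p" for w
      using fg3 that unfolding jm(1) by blast
    have j0: "Mn_join 0 x = x" "Mn_join 0 y = y" by (simp_all add: Mn_join_def)
    have z1: "\<forall>w\<in>set_pmf p. w 0 = fst (g1 (w x))"
    proof
      fix w assume "w \<in> set_pmf p"
      hence "(w 0, w x) = g1 (w x)" using fg1 unfolding j0 by blast
      thus "w 0 = fst (g1 (w x))" by (metis fst_conv)
    qed
    have z2: "\<forall>w\<in>set_pmf p. w 0 = fst (g2 (w y))"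
    proof
      fix w assume "w \<in> set_pmf p"
      hence "(w 0, w y) = g2 (w y)" using fg2 unfolding j0 by blast
      thus "w 0 = fst (g2 (w y))" by (metis fst_conv)
    qed
    define J where "J = map_pmf (\<lambda>w. (w x, w y)) p"
    have S: "NE J + NE (map_pmf (\<lambda>v. fst (g1 (fst v))) J) \<le> NE (map_pmf fst J) + NE (map_pmf snd J)"
    proof (rule NE_submod[where g = "\<lambda>b. fst (g2 b)"])
      fix v assume "v \<in> set_pmf J"
      then obtain w where w: "w \<in> set_pmf p" "v = (w x, w y)" by (auto simp: J_def)
      have "fst (g1 (w x)) = fst (g2 (w y))" using z1 z2 w(1) by metis
      thus "fst (g1 (fst v)) = fst (g2 (snd v))" using w(2) by simp
    qed
    have m0: "map_pmf (\<lambda>v. fst (g1 (fst v))) J = map_pmf (\<lambda>w. w 0) p"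
      unfolding J_def map_pmf_comp by (rule map_pmf_cong) (use z1 in auto)
    have m12: "map_pmf fst J = map_pmf (\<lambda>w. w x) p" "map_pmf snd J = map_pmf (\<lambda>w. w y) p"
      unfolding J_def map_pmf_comp by simp_all
    have m3: "NE J = E 1"
    proof (rule antisym)
      show "NE J \<le> E 1" unfolding J_def E_def
        by (rule NE_map_le_supp[where f = g3]) (use fg3' in blast)
      show "E 1 \<le> NE J" unfolding J_def E_def
        by (rule NE_map_le_supp[where f = f3]) (use fg3' in blast)
    qed
    have "E 1 + E 0 \<le> E x + E y" using S unfolding m0 m12 m3 E_def .
    hence "ennreal (h 1) + ennreal (h 0) \<le> ennreal (h x) + ennreal (h y)"
      using E(1)[OF C01(1)] E(1)[OF C01(2)] E(1)[OF xc] E(1)[OF yc] by metis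
    hence "ennreal (h 1 + h 0) \<le> ennreal (h x + h y)"
      unfolding ennreal_plus[OF E(2)[OF C01(2)] E(2)[OF C01(1)]] ennreal_plus[OF E(2)[OF xc] E(2)[OF yc]] .
    hence "h 1 + h 0 \<le> h x + h y"
      by (rule ennreal_le_real[rotated]) (use E(2)[OF xc] E(2)[OF yc] in simp)
    thus ?thesis using jm by simp
  qed
  show ?thesis unfolding polymatroid_def
  proof (intro conjI ballI impI)
    fix x assume "x \<in> Mn_carrier n" thus "0 \<le> h x" by (rule E(2))
  next
    fix x y assume "x \<in> Mn_carrier n" "y \<in> Mn_carrier n" "Mn_le y x" thus "h y \<le> h x" by (rule mono)
  next
    fix x y assume "x \<in> Mn_carrier n" "y \<in> Mn_carrier n"
    thus "h (Mn_join x y) + h (Mn_meet x y) \<le> h x + h y" by (rule sub)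
  qed
qed

lemma closure_polymatroid:
  assumes n: "n \<ge> 2" and e: "entropic_closure n h"
  shows "polymatroid n h"
proof -
  obtain hs where ent: "\<And>k. entropic n (hs k)" and
    lim: "\<And>x. x \<in> Mn_carrier n \<Longrightarrow> (\<lambda>k. hs k x) \<longlonglongrightarrow> h x"
    using e unfolding entropic_closure_def by blast
  have P: "polymatroid n (hs k)" for k using entropic_polymatroid[OF n ent] .
  have P1: "0 \<le> hs k x" if "x \<in> Mn_carrier n" for k x using P[of k] that unfolding polymatroid_def by blast
  have P2: "hs k y \<le> hs k x" if "x \<in> Mn_carrier n" "y \<in> Mn_carrier n" "Mn_le y x" for k x y
    using P[of k] that unfolding polymatroid_def by blast
  have P3: "hs k (Mn_join x y) + hs k (Mn_meet x y) \<le> hs k x + hs k y"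
    if "x \<in> Mn_carrier n" "y \<in> Mn_carrier n" for k x y
    using P[of k] that unfolding polymatroid_def by blast
  have C: "Mn_join x y \<in> Mn_carrier n" "Mn_meet x y \<in> Mn_carrier n"
    if "x \<in> Mn_carrier n" "y \<in> Mn_carrier n" for x y
    using that n by (auto simp: Mn_join_def Mn_meet_def Mn_carrier_def)
  show ?thesis unfolding polymatroid_def
  proof (intro conjI ballI impI)
    fix x assume x: "x \<in> Mn_carrier n"
    show "0 \<le> h x" by (rule LIMSEQ_le_const[OF lim[OF x]]) (use P1 x in auto)
  next
    fix x y assume x: "x \<in> Mn_carrier n" and y: "y \<in> Mn_carrier n" and "Mn_le y x"
    thus "h y \<le> h x" by (intro LIMSEQ_le[OF lim[OF y] lim[OF x]]) (use P2 x y \<open>Mn_le y x\<close> in auto)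
  next
    fix x y assume x: "x \<in> Mn_carrier n" and y: "y \<in> Mn_carrier n"
    show "h (Mn_join x y) + h (Mn_meet x y) \<le> h x + h y"
      by (intro LIMSEQ_le[OF tendsto_add[OF lim[OF C(1)[OF x y]] lim[OF C(2)[OF x y]]]
            tendsto_add[OF lim[OF x] lim[OF y]]])
         (use P3 x y in auto)
  qed
qed

lemma NE_uniform:
  assumes "finite T" "T \<noteq> {}"
  shows "NE (pmf_of_set T) = ennreal (log 2 (real (card T)))"
proof -
  have c: "card T > 0" using assms by (simp add: card_gt_0_iff)
  have "NE (pmf_of_set T) = (\<integral>\<^sup>+ v. ennreal (log 2 (real (card T))) \<partial>measure_pmf (pmf_of_set T))"
    unfolding NE_def
  proof (rule nn_integral_cong_AE)
    show "AE v in measure_pmf (pmf_of_set T). ennreal (- log 2 (pmf (pmf_of_set T) v)) = ennreal (log 2 (real (card T)))"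
      using AE_measure_pmf[of "pmf_of_set T"]
      by eventually_elim (use assms c in \<open>simp add: log_divide\<close>)
  qed
  also have "\<dots> = ennreal (log 2 (real (card T)))" by simp
  finally show ?thesis .
qed

lemma Ent_uniform: "finite T \<Longrightarrow> T \<noteq> {} \<Longrightarrow> Ent (pmf_of_set T) (log 2 (real (card T)))"
  unfolding Ent_iff using NE_uniform by (simp add: card_gt_0_iff Suc_leI)

lemma NE_return: "NE (return_pmf c) = 0"
  using NE_uniform[of "{c}"] by (simp add: pmf_of_set_singleton)

lemma NE_inj: "inj f \<Longrightarrow> NE (map_pmf f q) = NE q"
proof (rule antisym)
  assume "inj f"
  show "NE (map_pmf f q) \<le> NE q" by (rule NE_map_le)
  have "q = map_pmf (inv f) (map_pmf f q)" using \<open>inj f\<close> by (simp add: map_pmf_comp)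
  thus "NE q \<le> NE (map_pmf f q)" using NE_map_le by metis
qed

lemma NE_pair: "NE (pair_pmf A B) = NE A + NE B"
proof -
  have "NE (pair_pmf A B) = (\<integral>\<^sup>+ v. ennreal (- log 2 (pmf A (fst v))) + ennreal (- log 2 (pmf B (snd v))) \<partial>pair_pmf A B)"
    unfolding NE_def
  proof (rule nn_integral_cong_AE)
    show "AE v in measure_pmf (pair_pmf A B). ennreal (- log 2 (pmf (pair_pmf A B) v)) =
        ennreal (- log 2 (pmf A (fst v))) + ennreal (- log 2 (pmf B (snd v)))"
      using AE_measure_pmf[of "pair_pmf A B"]
    proof eventually_elim
      case (elim v)
      obtain a b where v: "v = (a, b)" by (cases v)
      have pa: "pmf A a > 0" "pmf B b > 0" using elim v by (auto simp: pmf_positive)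
      have nn: "0 \<le> - log 2 (pmf A a)" "0 \<le> - log 2 (pmf B b)"
        using mlog_nonneg[OF pmf_nonneg pmf_le_1] by auto
      show ?case using pa nn by (simp add: v pmf_pair log_mult flip: ennreal_plus)
    qed
  qed
  also have "\<dots> = (\<integral>\<^sup>+ v. ennreal (- log 2 (pmf A (fst v))) \<partial>pair_pmf A B) + (\<integral>\<^sup>+ v. ennreal (- log 2 (pmf B (snd v))) \<partial>pair_pmf A B)"
    by (rule nn_integral_add) auto
  also have "(\<integral>\<^sup>+ v. ennreal (- log 2 (pmf A (fst v))) \<partial>pair_pmf A B) = NE (map_pmf fst (pair_pmf A B))"
    using nn_integral_map_pmf[where f="\<lambda>v. ennreal (- log 2 (pmf A v))" and g=fst and M="pair_pmf A B"]
    unfolding NE_def map_fst_pair_pmf by simp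
  also have "(\<integral>\<^sup>+ v. ennreal (- log 2 (pmf B (snd v))) \<partial>pair_pmf A B) = NE (map_pmf snd (pair_pmf A B))"
    using nn_integral_map_pmf[where f="\<lambda>v. ennreal (- log 2 (pmf B v))" and g=snd and M="pair_pmf A B"]
    unfolding NE_def map_snd_pair_pmf by simp
  finally show ?thesis by (simp add: map_fst_pair_pmf map_snd_pair_pmf)
qed

lemma entropic_zero: "entropic n (\<lambda>x. 0)"
  unfolding entropic_def
proof (intro exI[of _ "return_pmf (\<lambda>_. 0)"] conjI ballI)
  fix x y
  show "\<exists>f g. \<forall>w\<in>set_pmf (return_pmf (\<lambda>_. 0 :: nat)). w (Mn_join x y) = f (w x, w y) \<and> (w x, w y) = g (w (Mn_join x y))"
    by (intro exI[of _ "\<lambda>_. 0"] exI[of _ "\<lambda>_. (0, 0)"]) simp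
next
  fix x
  show "has_entropy (return_pmf (\<lambda>_. 0)) (\<lambda>w. w x) 0"
    unfolding has_entropy_Ent Ent_iff by (simp add: NE_return)
qed

definition penc :: "(nat \<Rightarrow> nat) \<times> (nat \<Rightarrow> nat) \<Rightarrow> nat \<Rightarrow> nat" where
  "penc = (\<lambda>(w1, w2) x. prod_encode (w1 x, w2 x))"

lemma entropic_add:
  assumes e1: "entropic n h1" and e2: "entropic n h2"
  shows "entropic n (\<lambda>x. h1 x + h2 x)"
proof -
  obtain p1 :: "(nat \<Rightarrow> nat) pmf" where
    det1: "\<forall>x\<in>Mn_carrier n. \<forall>y\<in>Mn_carrier n. (\<exists>f g. \<forall>w\<in>set_pmf p1.
           w (Mn_join x y) = f (w x, w y) \<and> (w x, w y) = g (w (Mn_join x y)))" and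
    ent1: "\<forall>x\<in>Mn_carrier n. has_entropy p1 (\<lambda>w. w x) (h1 x)"
    using e1 unfolding entropic_def by (elim exE conjE)
  obtain p2 :: "(nat \<Rightarrow> nat) pmf" where
    det2: "\<forall>x\<in>Mn_carrier n. \<forall>y\<in>Mn_carrier n. (\<exists>f g. \<forall>w\<in>set_pmf p2.
           w (Mn_join x y) = f (w x, w y) \<and> (w x, w y) = g (w (Mn_join x y)))" and
    ent2: "\<forall>x\<in>Mn_carrier n. has_entropy p2 (\<lambda>w. w x) (h2 x)"
    using e2 unfolding entropic_def by (elim exE conjE)
  define p where "p = map_pmf penc (pair_pmf p1 p2)"
  show ?thesis unfolding entropic_def
  proof (intro exI[of _ p] conjI ballI)
    fix x y assume x: "x \<in> Mn_carrier n" and y: "y \<in> Mn_carrier n"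
    obtain f1 g1 where fg1: "\<forall>w\<in>set_pmf p1. w (Mn_join x y) = f1 (w x, w y) \<and> (w x, w y) = g1 (w (Mn_join x y))"
      using det1 x y by blast
    obtain f2 g2 where fg2: "\<forall>w\<in>set_pmf p2. w (Mn_join x y) = f2 (w x, w y) \<and> (w x, w y) = g2 (w (Mn_join x y))"
      using det2 x y by blast
    define f where "f = (\<lambda>(a::nat, b::nat). prod_encode (f1 (fst (prod_decode a), fst (prod_decode b)),
                                                    f2 (snd (prod_decode a), snd (prod_decode b))))"
    define g where "g = (\<lambda>c::nat. (prod_encode (fst (g1 (fst (prod_decode c))), fst (g2 (snd (prod_decode c)))),
                                   prod_encode (snd (g1 (fst (prod_decode c))), snd (g2 (snd (prod_decode c))))))"
    show "\<exists>f g. \<forall>w\<in>set_pmf p. w (Mn_join x y) = f (w x, w y) \<and> (w x, w y) = g (w (Mn_join x y))"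
    proof (intro exI[of _ f] exI[of _ g] ballI)
      fix w assume "w \<in> set_pmf p"
      then obtain w1 w2 where w: "w1 \<in> set_pmf p1" "w2 \<in> set_pmf p2" "w = penc (w1, w2)"
        by (auto simp: p_def)
      have A: "w1 (Mn_join x y) = f1 (w1 x, w1 y)" "(w1 x, w1 y) = g1 (w1 (Mn_join x y))"
        using fg1 w(1) by blast+
      have B: "w2 (Mn_join x y) = f2 (w2 x, w2 y)" "(w2 x, w2 y) = g2 (w2 (Mn_join x y))"
        using fg2 w(2) by blast+
      show "w (Mn_join x y) = f (w x, w y) \<and> (w x, w y) = g (w (Mn_join x y))"
        unfolding w(3) penc_def f_def g_def using A B
        by (simp add: prod_eq_iff)
    qed
  next
    fix x assume x: "x \<in> Mn_carrier n"
    have "map_pmf (\<lambda>w. w x) p = map_pmf prod_encode (pair_pmf (map_pmf (\<lambda>w. w x) p1) (map_pmf (\<lambda>w. w x) p2))"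
      unfolding p_def map_pmf_comp map_pair[symmetric] by (simp add: penc_def case_prod_beta)
    hence "NE (map_pmf (\<lambda>w. w x) p) = NE (map_pmf (\<lambda>w. w x) p1) + NE (map_pmf (\<lambda>w. w x) p2)"
      by (simp add: NE_inj inj_prod_encode NE_pair)
    moreover have "NE (map_pmf (\<lambda>w. w x) p1) = ennreal (h1 x)" "h1 x \<ge> 0"
      "NE (map_pmf (\<lambda>w. w x) p2) = ennreal (h2 x)" "h2 x \<ge> 0"
      using ent1 ent2 x unfolding has_entropy_Ent Ent_iff by auto
    ultimately show "has_entropy p (\<lambda>w. w x) (h1 x + h2 x)"
      unfolding has_entropy_Ent Ent_iff by simp
  qed
qed

definition Mix :: "real \<Rightarrow> nat pmf \<Rightarrow> nat pmf" where
  "Mix e q = bind_pmf (bernoulli_pmf e) (\<lambda>t. if t then map_pmf Suc q else return_pmf 0)"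

definition bin :: "real \<Rightarrow> real" where
  "bin e = - e * log 2 e - (1 - e) * log 2 (1 - e)"

lemma pmf_Mix:
  assumes "0 \<le> e" "e \<le> 1"
  shows "pmf (Mix e q) 0 = 1 - e" "pmf (Mix e q) (Suc v) = e * pmf q v"
proof -
  have m0: "pmf (map_pmf Suc q) 0 = 0" by (simp add: pmf_map vimage_def)
  show "pmf (Mix e q) 0 = 1 - e" unfolding Mix_def pmf_bind using assms m0 by simp
  have "pmf (map_pmf Suc q) (Suc v) = pmf q v" by (rule pmf_map_inj') simp
  thus "pmf (Mix e q) (Suc v) = e * pmf q v" unfolding Mix_def pmf_bind using assms by simp
qed

lemma NE_Mix:
  assumes e: "0 < e" "e \<le> 1"
  shows "NE (Mix e q) = ennreal (bin e) + ennreal e * NE q"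
proof -
  define F where "F u = ennreal (- log 2 (pmf (Mix e q) u))" for u
  have le: "0 \<le> - log 2 e" "0 \<le> - log 2 (1 - e)" using e mlog_nonneg[of e] mlog_nonneg[of "1 - e"] by auto
  have "NE (Mix e q) = (\<integral>\<^sup>+ t. (\<integral>\<^sup>+ u. F u \<partial>(if t then map_pmf Suc q else return_pmf 0)) \<partial>bernoulli_pmf e)"
    unfolding NE_def F_def Mix_def[of e q, symmetric] by (simp add: Mix_def[of e q])
  also have "\<dots> = (\<integral>\<^sup>+ u. F u \<partial>map_pmf Suc q) * ennreal e + (\<integral>\<^sup>+ u. F u \<partial>return_pmf 0) * ennreal (1 - e)"
    using e by (subst nn_integral_bernoulli_pmf) auto
  also have "(\<integral>\<^sup>+ u. F u \<partial>return_pmf 0) = ennreal (- log 2 (1 - e))"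
    unfolding F_def using e by (simp add: pmf_Mix)
  also have "(\<integral>\<^sup>+ u. F u \<partial>map_pmf Suc q) = (\<integral>\<^sup>+ v. ennreal (- log 2 e) + ennreal (- log 2 (pmf q v)) \<partial>q)"
    unfolding nn_integral_map_pmf
  proof (rule nn_integral_cong_AE)
    show "AE v in measure_pmf q. F (Suc v) = ennreal (- log 2 e) + ennreal (- log 2 (pmf q v))"
      using AE_measure_pmf[of q]
    proof eventually_elim
      case (elim v)
      have p: "pmf q v > 0" using elim by (simp add: pmf_positive)
      have nn: "0 \<le> - log 2 (pmf q v)" using mlog_nonneg[OF pmf_nonneg pmf_le_1] .
      show ?case unfolding F_def using e p nn le by (simp add: pmf_Mix log_mult flip: ennreal_plus)
    qed
  qed
  also have "\<dots> = ennreal (- log 2 e) + NE q"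
    unfolding NE_def by (subst nn_integral_add) auto
  also have "ennreal (bin e) = ennreal (- log 2 e) * ennreal e + ennreal (- log 2 (1 - e)) * ennreal (1 - e)"
  proof -
    have eq: "bin e = (- log 2 e) * e + (- log 2 (1 - e)) * (1 - e)" by (simp add: bin_def algebra_simps)
    have n1: "0 \<le> (- log 2 e) * e" "0 \<le> (- log 2 (1 - e)) * (1 - e)" using e le by (auto intro!: mult_nonpos_nonneg)
    have n2: "0 \<le> e" "0 \<le> 1 - e" using e by auto
    show ?thesis unfolding eq ennreal_plus[OF n1] ennreal_mult[OF le(1) n2(1)] ennreal_mult[OF le(2) n2(2)] ..
  qed
  ultimately show ?thesis by (simp add: algebra_simps)
qed

lemma bin_nonneg: "0 < e \<Longrightarrow> e \<le> 1 \<Longrightarrow> 0 \<le> bin e"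
proof -
  assume e: "0 < e" "e \<le> 1"
  have le: "0 \<le> - log 2 e" "0 \<le> - log 2 (1 - e)" using e mlog_nonneg[of e] mlog_nonneg[of "1 - e"] by auto
  have eq: "bin e = (- log 2 e) * e + (- log 2 (1 - e)) * (1 - e)" by (simp add: bin_def algebra_simps)
  have n1: "0 \<le> (- log 2 e) * e" "0 \<le> (- log 2 (1 - e)) * (1 - e)" using e le by (auto intro!: mult_nonpos_nonneg)
  show ?thesis unfolding eq using n1 by simp
qed

lemma entropic_mix:
  assumes eh: "entropic n h" and e: "0 < e" "e \<le> 1"
  shows "entropic n (\<lambda>x. bin e + e * h x)"
proof -
  obtain p :: "(nat \<Rightarrow> nat) pmf" where
    det: "\<forall>x\<in>Mn_carrier n. \<forall>y\<in>Mn_carrier n. (\<exists>f g. \<forall>w\<in>set_pmf p.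
           w (Mn_join x y) = f (w x, w y) \<and> (w x, w y) = g (w (Mn_join x y)))" and
    ent: "\<forall>x\<in>Mn_carrier n. has_entropy p (\<lambda>w. w x) (h x)"
    using eh unfolding entropic_def by (elim exE conjE)
  define p' where "p' = bind_pmf (bernoulli_pmf e) (\<lambda>t. if t then map_pmf (\<lambda>w x. Suc (w x)) p else return_pmf (\<lambda>x. 0))"
  have supp: "(\<exists>w0\<in>set_pmf p. w = (\<lambda>x. Suc (w0 x))) \<or> w = (\<lambda>x. 0)" if wp: "w \<in> set_pmf p'" for w
  proof -
    obtain t where "w \<in> set_pmf (if t then map_pmf (\<lambda>w x. Suc (w x)) p else return_pmf (\<lambda>x. 0))"
      using wp unfolding p'_def set_bind_pmf by blast
    thus ?thesis by (cases t) auto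
  qed
  show ?thesis unfolding entropic_def
  proof (intro exI[of _ p'] conjI ballI)
    fix x y assume x: "x \<in> Mn_carrier n" and y: "y \<in> Mn_carrier n"
    obtain f g where fg: "\<forall>w\<in>set_pmf p. w (Mn_join x y) = f (w x, w y) \<and> (w x, w y) = g (w (Mn_join x y))"
      using det x y by blast
    define f' where "f' = (\<lambda>(a::nat, b::nat). if a = 0 then 0 else Suc (f (a - 1, b - 1)))"
    define g' where "g' = (\<lambda>c::nat. if c = 0 then (0::nat, 0::nat) else (Suc (fst (g (c - 1))), Suc (snd (g (c - 1)))))"
    show "\<exists>f g. \<forall>w\<in>set_pmf p'. w (Mn_join x y) = f (w x, w y) \<and> (w x, w y) = g (w (Mn_join x y))"
    proof (intro exI[of _ f'] exI[of _ g'] ballI)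
      fix w assume "w \<in> set_pmf p'"
      from supp[OF this] show "w (Mn_join x y) = f' (w x, w y) \<and> (w x, w y) = g' (w (Mn_join x y))"
      proof
        assume "\<exists>w0\<in>set_pmf p. w = (\<lambda>x. Suc (w0 x))"
        then obtain w0 where w0: "w0 \<in> set_pmf p" "w = (\<lambda>x. Suc (w0 x))" by blast
        have A: "w0 (Mn_join x y) = f (w0 x, w0 y)" "(w0 x, w0 y) = g (w0 (Mn_join x y))"
          using fg w0(1) by blast+
        have "f' (Suc (w0 x), Suc (w0 y)) = Suc (w0 (Mn_join x y))" by (simp add: f'_def A(1))
        moreover have "g' (Suc (w0 (Mn_join x y))) = (Suc (w0 x), Suc (w0 y))" by (simp add: g'_def A(2)[symmetric])
        ultimately show ?thesis unfolding w0(2) by simp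
      next
        assume "w = (\<lambda>x. 0)"
        thus ?thesis by (simp add: f'_def g'_def)
      qed
    qed
  next
    fix x assume x: "x \<in> Mn_carrier n"
    have "map_pmf (\<lambda>w. w x) p' = Mix e (map_pmf (\<lambda>w. w x) p)"
      unfolding p'_def Mix_def map_bind_pmf
      by (intro bind_pmf_cong refl) (simp add: map_pmf_comp)
    moreover have "NE (map_pmf (\<lambda>w. w x) p) = ennreal (h x)" "h x \<ge> 0"
      using ent x unfolding has_entropy_Ent Ent_iff by auto
    ultimately have "NE (map_pmf (\<lambda>w. w x) p') = ennreal (bin e) + ennreal e * ennreal (h x)"
      using NE_Mix[OF e] by simp
    also have "\<dots> = ennreal (bin e + e * h x)"
      using bin_nonneg[OF e] e \<open>h x \<ge> 0\<close> by (simp add: ennreal_mult ennreal_plus)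
    finally show "has_entropy p' (\<lambda>w. w x) (bin e + e * h x)"
      unfolding has_entropy_Ent Ent_iff using bin_nonneg[OF e] e \<open>h x \<ge> 0\<close> by simp
  qed
qed

lemma NE_inj_on: "inj_on f (set_pmf q) \<Longrightarrow> NE (map_pmf f q) = NE q"
proof (rule antisym)
  assume i: "inj_on f (set_pmf q)"
  show "NE (map_pmf f q) \<le> NE q" by (rule NE_map_le)
  have "map_pmf (inv_into (set_pmf q) f) (map_pmf f q) = map_pmf (\<lambda>x. x) q"
    unfolding map_pmf_comp by (rule map_pmf_cong) (use i in auto)
  hence "q = map_pmf (inv_into (set_pmf q) f) (map_pmf f q)" by simp
  thus "NE q \<le> NE (map_pmf f q)" using NE_map_le by metis
qed

definition U :: "nat \<Rightarrow> nat pmf" where "U q = pmf_of_set {..<q}"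

lemma set_U: "q > 0 \<Longrightarrow> set_pmf (U q) = {..<q}"
  unfolding U_def by (simp add: lessThan_empty_iff)

lemma NE_U: "q > 0 \<Longrightarrow> NE (U q) = ennreal (log 2 q)"
  unfolding U_def by (subst NE_uniform) (auto simp: lessThan_empty_iff)

lemma map_shift_U:
  assumes q: "q > 0"
  shows "map_pmf (\<lambda>a. (a + c) mod q) (U q) = U q"
proof -
  have inj: "inj_on (\<lambda>a. (a + c) mod q) {..<q}"
  proof (rule inj_onI)
    fix a a' assume "a \<in> {..<q}" "a' \<in> {..<q}" "(a + c) mod q = (a' + c) mod q"
    hence "[a + c = a' + c] (mod q)" "a < q" "a' < q" by (auto simp: cong_def)
    thus "a = a'" using cong_add_rcancel_nat cong_less_modulus_unique_nat by blast
  qed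
  have im: "(\<lambda>a. (a + c) mod q) ` {..<q} = {..<q}"
    by (rule endo_inj_surj) (use q inj in auto)
  show ?thesis unfolding U_def
    by (subst map_pmf_of_set_inj[OF inj]) (use q im in \<open>auto simp: lessThan_empty_iff\<close>)
qed

lemma map_mds_U:
  assumes q: "q > 0"
  shows "map_pmf (\<lambda>v. (fst v + x * snd v) mod q) (pair_pmf (U q) (U q)) = U q"
proof -
  have "map_pmf (\<lambda>v. (fst v + x * snd v) mod q) (pair_pmf (U q) (U q))
      = map_pmf (\<lambda>v. (snd v + x * fst v) mod q) (pair_pmf (U q) (U q))"
    by (subst pair_commute_pmf) (simp add: map_pmf_comp case_prod_beta)
  also have "\<dots> = bind_pmf (U q) (\<lambda>b. map_pmf (\<lambda>a. (a + x * b) mod q) (U q))"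
    unfolding pair_pmf_def map_bind_pmf by (simp add: map_pmf_def[symmetric] bind_return_pmf map_bind_pmf)
  also have "\<dots> = bind_pmf (U q) (\<lambda>b. U q)"
    using map_shift_U[OF q] by simp
  also have "\<dots> = U q" by simp
  finally show ?thesis .
qed

lemma det_fun:
  assumes "\<forall>v\<in>S. \<forall>v'\<in>S. B v = B v' \<longrightarrow> A v = A v'"
  shows "\<exists>f. \<forall>v\<in>S. A v = f (B v)"
proof (intro exI[of _ "\<lambda>b. A (SOME v. v \<in> S \<and> B v = b)"] ballI)
  fix v assume v: "v \<in> S"
  hence "\<exists>v'. v' \<in> S \<and> B v' = B v" by blast
  hence "(SOME v'. v' \<in> S \<and> B v' = B v) \<in> S \<and> B (SOME v'. v' \<in> S \<and> B v' = B v) = B v"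
    by (rule someI_ex)
  thus "A v = A (SOME v'. v' \<in> S \<and> B v' = B v)" using assms v by metis
qed

lemma enc_inj:
  fixes a b a' b' q :: nat
  assumes "a < q" "a' < q" "a + q * b = a' + q * b'"
  shows "a = a' \<and> b = b'"
proof -
  have "(a + q * b) mod q = (a' + q * b') mod q" using assms(3) by simp
  hence "a = a'" using assms(1,2) by simp
  with assms(3) have "q * b = q * b'" by simp
  thus ?thesis using \<open>a = a'\<close> assms(1) by simp
qed

lemma small_dvd_int:
  fixes d :: int
  assumes "int q dvd d" "\<bar>d\<bar> < int q"
  shows "d = 0"
proof (rule ccontr)
  assume nz: "d \<noteq> 0"
  obtain k where k: "d = int q * k" using assms(1) by (elim dvdE)
  hence "k \<noteq> 0" using nz by auto
  hence "1 \<le> \<bar>k\<bar>" by simp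
  have "\<bar>d\<bar> = int q * \<bar>k\<bar>" by (simp add: k abs_mult)
  also have "\<dots> \<ge> int q * 1" using \<open>1 \<le> \<bar>k\<bar>\<close> by (intro mult_left_mono) auto
  finally show False using assms(2) by simp
qed

lemma mod_eq_int_dvd:
  fixes x y q :: nat
  assumes "x mod q = y mod q"
  shows "int q dvd int x - int y"
proof -
  have "int x mod int q = int y mod int q" using assms by (metis of_nat_mod)
  thus ?thesis by (simp add: mod_eq_dvd_iff)
qed

lemma mds_inj:
  fixes a b a' b' q i j :: nat
  assumes q: "prime q" and ij: "i < q" "j < q" "i \<noteq> j"
    and ab: "a < q" "a' < q" "b < q" "b' < q"
    and e1: "(a + i * b) mod q = (a' + i * b') mod q"
    and e2: "(a + j * b) mod q = (a' + j * b') mod q"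
  shows "a = a' \<and> b = b'"
proof -
  have d1: "int q dvd (int a - int a') + int i * (int b - int b')"
    using mod_eq_int_dvd[OF e1] by (simp add: algebra_simps)
  have d2: "int q dvd (int a - int a') + int j * (int b - int b')"
    using mod_eq_int_dvd[OF e2] by (simp add: algebra_simps)
  have "int q dvd (int i - int j) * (int b - int b')"
    using dvd_diff[OF d1 d2] by (simp add: algebra_simps)
  moreover have "prime (int q)" using q by simp
  ultimately have "int q dvd (int i - int j) \<or> int q dvd (int b - int b')"
    using prime_dvd_mult_iff by blast
  moreover have "\<not> int q dvd (int i - int j)"
    using small_dvd_int[of q "int i - int j"] ij by (auto simp: abs_less_iff)
  ultimately have "int q dvd (int b - int b')" by blast
  hence bb: "b = b'" using small_dvd_int[of q "int b - int b'"] ab by (auto simp: abs_less_iff)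
  with d1 have "int q dvd (int a - int a')" by simp
  hence "a = a'" using small_dvd_int[of q "int a - int a'"] ab by (auto simp: abs_less_iff)
  thus ?thesis using bb by simp
qed

definition cphi :: "nat \<Rightarrow> nat set \<Rightarrow> nat set \<Rightarrow> nat \<Rightarrow> nat \<times> nat \<Rightarrow> nat" where
  "cphi q Z I x v = (if x \<in> Z then 0 else if x \<in> I then fst v + q * snd v else (fst v + x * snd v) mod q)"

definition cvec :: "nat \<Rightarrow> nat set \<Rightarrow> nat set \<Rightarrow> nat \<Rightarrow> real" where
  "cvec q Z I x = (if x \<in> Z then 0 else if x \<in> I then 2 * log 2 q else log 2 q)"

lemma join_cases:
  fixes x y :: nat
  obtains "x = y" "Mn_join x y = x"
  | "x = 0" "Mn_join x y = y"
  | "y = 0" "Mn_join x y = x"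
  | "x \<noteq> 0" "y \<noteq> 0" "x = 1 \<or> y = 1" "Mn_join x y = 1"
  | "x \<noteq> y" "x \<notin> {0, 1}" "y \<notin> {0, 1}" "Mn_join x y = 1"
  unfolding Mn_join_def by (cases "x = y"; cases "x = 0"; cases "y = 0"; cases "x = 1"; cases "y = 1") auto

lemma code_entropic:
  assumes q: "prime q" "n \<le> q" and n: "n \<ge> 2"
    and Z1: "1 \<notin> Z" and I1: "1 \<in> I"
    and Z0: "0 \<in> Z \<or> (\<forall>x\<in>Mn_carrier n. x \<in> I \<and> x \<notin> Z)"
    and pr: "\<And>i j. i \<in> Mn_carrier n \<Longrightarrow> j \<in> Mn_carrier n \<Longrightarrow> i \<noteq> j \<Longrightarrow> i \<notin> {0, 1} \<Longrightarrow> j \<notin> {0, 1} \<Longrightarrow>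
        (i \<in> I \<and> i \<notin> Z) \<or> (j \<in> I \<and> j \<notin> Z) \<or> (i \<notin> Z \<and> j \<notin> Z)"
  shows "entropic n (cvec q Z I)"
proof -
  have q0: "q > 0" and q2: "q \<ge> 2" using q prime_gt_1_nat[OF q(1)] by auto
  define \<Omega> where "\<Omega> = {..<q} \<times> {..<q}"
  define P where "P = pair_pmf (U q) (U q)"
  have sP: "set_pmf P = \<Omega>" unfolding P_def \<Omega>_def using set_U[OF q0] by simp
  define \<phi> where "\<phi> = cphi q Z I"
  define p where "p = map_pmf (\<lambda>v x. \<phi> x v) P"
  have inj1: "v = v'" if "v \<in> \<Omega>" "v' \<in> \<Omega>" "\<phi> 1 v = \<phi> 1 v'" for v v'
    using that enc_inj[of "fst v" q "fst v'" "snd v" "snd v'"] Z1 I1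
    by (auto simp: \<phi>_def cphi_def \<Omega>_def prod_eq_iff)
  have injI: "v = v'" if "v \<in> \<Omega>" "v' \<in> \<Omega>" "\<phi> i v = \<phi> i v'" "i \<in> I" "i \<notin> Z" for v v' i
    using that enc_inj[of "fst v" q "fst v'" "snd v" "snd v'"]
    by (auto simp: \<phi>_def cphi_def \<Omega>_def prod_eq_iff)
  have injpair: "v = v'" if A: "v \<in> \<Omega>" "v' \<in> \<Omega>" "\<phi> i v = \<phi> i v'" "\<phi> j v = \<phi> j v'"
    "i \<in> Mn_carrier n" "j \<in> Mn_carrier n" "i \<noteq> j" "i \<notin> {0, 1}" "j \<notin> {0, 1}" for v v' i j
  proof -
    consider "i \<in> I \<and> i \<notin> Z" | "j \<in> I \<and> j \<notin> Z" | "i \<notin> Z \<and> j \<notin> Z \<and> i \<notin> I \<and> j \<notin> I"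
      using pr[OF A(5-9)] by blast
    thus ?thesis
    proof cases
      case 1 thus ?thesis using injI A by blast
    next
      case 2 thus ?thesis using injI A by blast
    next
      case 3
      have "i < q" "j < q" using A(5,6) q(2) by (auto simp: Mn_carrier_def)
      moreover have "(fst v + i * snd v) mod q = (fst v' + i * snd v') mod q"
        "(fst v + j * snd v) mod q = (fst v' + j * snd v') mod q"
        using A(3,4) 3 by (auto simp: \<phi>_def cphi_def)
      ultimately show ?thesis using mds_inj[OF q(1), of i j "fst v" "fst v'" "snd v" "snd v'"] A(1,2,7)
        by (auto simp: \<Omega>_def prod_eq_iff)
    qed
  qed
  have z0: "\<phi> 0 v = \<phi> 0 v'" if "x \<in> Mn_carrier n" "\<phi> x v = \<phi> x v'" for x v v'
    using Z0
  proof
    assume "0 \<in> Z" thus ?thesis by (simp add: \<phi>_def cphi_def)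
  next
    assume a: "\<forall>x\<in>Mn_carrier n. x \<in> I \<and> x \<notin> Z"
    have "0 \<in> Mn_carrier n" using n by (simp add: Mn_carrier_def)
    thus ?thesis using a that by (auto simp: \<phi>_def cphi_def)
  qed
  have DD: "(\<forall>v\<in>\<Omega>. \<forall>v'\<in>\<Omega>. (\<phi> x v, \<phi> y v) = (\<phi> x v', \<phi> y v') \<longrightarrow> \<phi> (Mn_join x y) v = \<phi> (Mn_join x y) v') \<and>
            (\<forall>v\<in>\<Omega>. \<forall>v'\<in>\<Omega>. \<phi> (Mn_join x y) v = \<phi> (Mn_join x y) v' \<longrightarrow> (\<phi> x v, \<phi> y v) = (\<phi> x v', \<phi> y v'))"
    if x: "x \<in> Mn_carrier n" and y: "y \<in> Mn_carrier n" for x y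
  proof (rule join_cases[of x y])
    assume "x = y" "Mn_join x y = x" thus ?thesis by simp
  next
    assume a: "x = 0" "Mn_join x y = y"
    have zz: "\<phi> 0 v = \<phi> 0 v'" if "\<phi> y v = \<phi> y v'" for v v' using z0[OF y that] .
    have j: "Mn_join 0 y = y" by (simp add: Mn_join_def)
    show ?thesis unfolding a(1) j using zz by blast
  next
    assume a: "y = 0" "Mn_join x y = x"
    have zz: "\<phi> 0 v = \<phi> 0 v'" if "\<phi> x v = \<phi> x v'" for v v' using z0[OF x that] .
    have j: "Mn_join x 0 = x" by (simp add: Mn_join_def)
    show ?thesis unfolding a(1) j using zz by blast
  next
    assume a: "x \<noteq> 0" "y \<noteq> 0" "x = 1 \<or> y = 1" "Mn_join x y = 1"
    show ?thesis unfolding a(4)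
    proof (intro conjI ballI impI)
      fix v v' assume "v \<in> \<Omega>" "v' \<in> \<Omega>" "(\<phi> x v, \<phi> y v) = (\<phi> x v', \<phi> y v')"
      thus "\<phi> 1 v = \<phi> 1 v'" using a(3) by auto
    next
      fix v v' assume "v \<in> \<Omega>" "v' \<in> \<Omega>" "\<phi> 1 v = \<phi> 1 v'"
      hence "v = v'" by (rule inj1)
      thus "(\<phi> x v, \<phi> y v) = (\<phi> x v', \<phi> y v')" by simp
    qed
  next
    assume a: "x \<noteq> y" "x \<notin> {0, 1}" "y \<notin> {0, 1}" "Mn_join x y = 1"
    show ?thesis unfolding a(4)
    proof (intro conjI ballI impI)
      fix v v' assume v: "v \<in> \<Omega>" "v' \<in> \<Omega>" "(\<phi> x v, \<phi> y v) = (\<phi> x v', \<phi> y v')"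
      hence "v = v'" using injpair[OF v(1,2) _ _ x y a(1-3)] by simp
      thus "\<phi> 1 v = \<phi> 1 v'" by simp
    next
      fix v v' assume "v \<in> \<Omega>" "v' \<in> \<Omega>" "\<phi> 1 v = \<phi> 1 v'"
      hence "v = v'" by (rule inj1)
      thus "(\<phi> x v, \<phi> y v) = (\<phi> x v', \<phi> y v')" by simp
    qed
  qed
  show ?thesis unfolding entropic_def
  proof (intro exI[of _ p] conjI ballI)
    fix x y assume x: "x \<in> Mn_carrier n" and y: "y \<in> Mn_carrier n"
    obtain f where f: "\<forall>v\<in>\<Omega>. \<phi> (Mn_join x y) v = f (\<phi> x v, \<phi> y v)"
      using det_fun[of \<Omega> "\<lambda>v. (\<phi> x v, \<phi> y v)" "\<phi> (Mn_join x y)"] DD[OF x y] by blast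
    obtain g where g: "\<forall>v\<in>\<Omega>. (\<phi> x v, \<phi> y v) = g (\<phi> (Mn_join x y) v)"
      using det_fun[of \<Omega> "\<phi> (Mn_join x y)" "\<lambda>v. (\<phi> x v, \<phi> y v)"] DD[OF x y] by blast
    show "\<exists>f g. \<forall>w\<in>set_pmf p. w (Mn_join x y) = f (w x, w y) \<and> (w x, w y) = g (w (Mn_join x y))"
      using f g by (intro exI[of _ f] exI[of _ g]) (auto simp: p_def sP)
  next
    fix x assume x: "x \<in> Mn_carrier n"
    have lq: "0 \<le> log 2 (real q)" using q2 by simp
    have m: "map_pmf (\<lambda>w. w x) p = map_pmf (\<phi> x) P" unfolding p_def map_pmf_comp by simp
    have "NE (map_pmf (\<phi> x) P) = ennreal (cvec q Z I x)"
    proof (cases "x \<in> Z")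
      case True
      hence "\<phi> x = (\<lambda>_. 0)" by (auto simp: \<phi>_def cphi_def)
      thus ?thesis using True by (simp add: NE_return cvec_def)
    next
      case nZ: False
      show ?thesis
      proof (cases "x \<in> I")
        case True
        have "inj_on (\<phi> x) (set_pmf P)" unfolding sP using injI True nZ by (auto intro: inj_onI)
        hence "NE (map_pmf (\<phi> x) P) = NE P" by (rule NE_inj_on)
        also have "\<dots> = ennreal (log 2 q) + ennreal (log 2 q)" unfolding P_def NE_pair NE_U[OF q0] ..
        also have "\<dots> = ennreal (cvec q Z I x)" using True nZ lq by (simp add: cvec_def flip: ennreal_plus)
        finally show ?thesis .
      next
        case False
        hence "\<phi> x = (\<lambda>v. (fst v + x * snd v) mod q)" using nZ by (auto simp: \<phi>_def cphi_def fun_eq_iff)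
        hence "map_pmf (\<phi> x) P = U q" unfolding P_def using map_mds_U[OF q0] by simp
        thus ?thesis using False nZ by (simp add: NE_U[OF q0] cvec_def)
      qed
    qed
    moreover have "cvec q Z I x \<ge> 0" using lq by (simp add: cvec_def)
    ultimately show "has_entropy p (\<lambda>w. w x) (cvec q Z I x)"
      unfolding has_entropy_Ent Ent_iff m by simp
  qed
qed

lemma bin_tendsto: "(bin \<longlongrightarrow> 0) (at_right 0)"
  unfolding bin_def log_def by real_asymp

lemma seq_tendsto: "(\<lambda>k. t / real (k + M)) \<longlonglongrightarrow> (0::real)"
  by real_asymp

lemma entropic_cong: "entropic n h \<Longrightarrow> (\<And>x. h x = h' x) \<Longrightarrow> entropic n h'"
  by (metis ext)

lemma entropic_scale_nat: "entropic n g \<Longrightarrow> entropic n (\<lambda>x. real N * g x)"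
proof (induction N)
  case 0 thus ?case using entropic_zero by simp
next
  case (Suc N)
  hence "entropic n (\<lambda>x. real N * g x + g x)" using entropic_add by blast
  thus ?case by (rule entropic_cong) (simp add: algebra_simps)
qed

lemma closure_cone:
  assumes g: "entropic n g" and t: "0 \<le> t"
  shows "entropic_closure n (\<lambda>x. t * g x)"
proof (cases "t = 0")
  case True
  show ?thesis unfolding entropic_closure_def
    by (intro exI[of _ "\<lambda>k x. 0"]) (use True entropic_zero in auto)
next
  case False
  hence t0: "t > 0" using t by simp
  define M where "M = nat \<lceil>t\<rceil> + 1"
  define e where "e k = t / real (k + M)" for k
  have e: "0 < e k" "e k \<le> 1" for k
  proof -
    have "t \<le> real (k + M)" unfolding M_def by linarith
    moreover have "real (k + M) > 0" unfolding M_def by simp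
    ultimately show "0 < e k" "e k \<le> 1" unfolding e_def using t0 by auto
  qed
  have eN: "e k * real (k + M) = t" for k unfolding e_def M_def by simp
  define hs where "hs k x = bin (e k) + e k * (real (k + M) * g x)" for k x
  have ent: "entropic n (hs k)" for k
    unfolding hs_def[abs_def] by (rule entropic_mix[OF entropic_scale_nat[OF g] e])
  have "(\<lambda>k. bin (e k)) \<longlonglongrightarrow> 0"
  proof (rule filterlim_compose[OF bin_tendsto])
    show "filterlim e (at_right 0) sequentially"
    proof (unfold filterlim_at, intro conjI)
      show "\<forall>\<^sub>F k in sequentially. e k \<in> {0<..} \<and> e k \<noteq> 0"
        by (intro always_eventually allI) (metis e(1) greaterThan_iff less_irrefl)
      show "e \<longlonglongrightarrow> 0" unfolding e_def[abs_def] by (rule seq_tendsto)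
    qed
  qed
  hence "(\<lambda>k. hs k x) \<longlonglongrightarrow> 0 + t * g x" for x
    unfolding hs_def mult.assoc[symmetric] eN by (intro tendsto_add) auto
  thus ?thesis unfolding entropic_closure_def using ent by auto
qed

lemma closure_add:
  assumes "entropic_closure n h1" "entropic_closure n h2"
  shows "entropic_closure n (\<lambda>x. h1 x + h2 x)"
proof -
  obtain hs1 where 1: "\<forall>k. entropic n (hs1 k)" "\<forall>x\<in>Mn_carrier n. (\<lambda>k. hs1 k x) \<longlonglongrightarrow> h1 x"
    using assms(1) unfolding entropic_closure_def by blast
  obtain hs2 where 2: "\<forall>k. entropic n (hs2 k)" "\<forall>x\<in>Mn_carrier n. (\<lambda>k. hs2 k x) \<longlonglongrightarrow> h2 x"
    using assms(2) unfolding entropic_closure_def by blast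
  show ?thesis unfolding entropic_closure_def
    by (intro exI[of _ "\<lambda>k x. hs1 k x + hs2 k x"]) (use 1 2 entropic_add in \<open>auto intro: tendsto_add\<close>)
qed

lemma closure_cong:
  assumes "entropic_closure n h" "\<And>x. x \<in> Mn_carrier n \<Longrightarrow> h x = h' x"
  shows "entropic_closure n h'"
  using assms unfolding entropic_closure_def by auto

locale setup_nq =
  fixes n q :: nat
  assumes n2: "n \<ge> 2" and qp: "prime q" and nq: "n \<le> q"
begin

definition L :: real where "L = log 2 (real q)"

lemma L_pos: "L > 0"
proof -
  have "q \<ge> 2" using prime_ge_2_nat[OF qp] .
  thus ?thesis unfolding L_def by simp
qed

lemma C01: "0 \<in> Mn_carrier n" "1 \<in> Mn_carrier n" using n2 by (auto simp: Mn_carrier_def)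

lemma gen_closure:
  assumes "0 \<le> t"
  shows "entropic_closure n (\<lambda>x. t * cvec q {0} (insert 1 S) x)"
proof -
  have "entropic n (cvec q {0} (insert 1 S))"
    by (rule code_entropic[OF qp nq n2]) auto
  thus ?thesis using closure_cone assms by blast
qed

lemma fk_closure:
  assumes "0 \<le> t" "k \<noteq> 1"
  shows "entropic_closure n (\<lambda>x. t * cvec q {0, k} (UNIV - {0, k}) x)"
proof -
  have "entropic n (cvec q {0, k} (UNIV - {0, k}))"
    by (rule code_entropic[OF qp nq n2]) (use assms(2) in auto)
  thus ?thesis using closure_cone assms by blast
qed

lemma one_closure:
  assumes "0 \<le> t"
  shows "entropic_closure n (\<lambda>x. t * cvec q {} UNIV x)"
proof -
  have "entropic n (cvec q {} UNIV)"
    by (rule code_entropic[OF qp nq n2]) auto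
  thus ?thesis using closure_cone assms by blast
qed

abbreviation "mid \<equiv> Mn_carrier n - {0, 1}"

lemma half_case:
  "card {i\<in>mid. h 1 < 2 * h i} = N \<Longrightarrow> h 0 = 0 \<Longrightarrow> 0 \<le> h 1 \<Longrightarrow>
   (\<forall>i\<in>mid. h 1 \<le> 2 * h i \<and> h i \<le> h 1) \<Longrightarrow> entropic_closure n h"
proof (induction N arbitrary: h rule: less_induct)
  case (less N h)
  define S where "S = {i\<in>mid. h 1 < 2 * h i}"
  have finS: "finite S" unfolding S_def Mn_carrier_def by auto
  have cv0: "cvec q {0} (insert 1 A) 0 = 0" for A by (simp add: cvec_def)
  have cv1: "cvec q {0} (insert 1 A) 1 = 2 * L" for A by (simp add: cvec_def L_def)
  have cvi: "cvec q {0} (insert 1 A) i = (if i \<in> A then 2 * L else L)" if "i \<in> mid" for i A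
    using that by (simp add: cvec_def L_def)
  show ?case
  proof (cases "S = {}")
    case True
    hence eq: "h i = h 1 / 2" if "i \<in> mid" for i using less.prems(4) that unfolding S_def by force
    have "entropic_closure n (\<lambda>x. (h 1 / (2 * L)) * cvec q {0} (insert 1 {}) x)"
      by (rule gen_closure) (use less.prems(3) L_pos in simp)
    thus ?thesis
    proof (rule closure_cong)
      fix x assume x: "x \<in> Mn_carrier n"
      consider "x = 0" | "x = 1" | "x \<in> mid" using x by blast
      thus "h 1 / (2 * L) * cvec q {0} (insert 1 {}) x = h x"
      proof cases
        case 1 thus ?thesis using less.prems(2) cv0 by simp
      next
        case 2 thus ?thesis using cv1 L_pos by simp
      next
        case 3 thus ?thesis using cvi[OF 3] eq[OF 3] L_pos by simp
      qed
    qed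
  next
    case False
    define t where "t = Min ((\<lambda>i. h i - h 1 / 2) ` S)"
    have tle: "t \<le> h i - h 1 / 2" if "i \<in> S" for i unfolding t_def using finS that by simp
    have "t \<in> (\<lambda>i. h i - h 1 / 2) ` S" unfolding t_def by (rule Min_in) (use finS False in auto)
    then obtain k where k: "k \<in> S" "h k - h 1 / 2 = t" by auto
    have t0: "t > 0" using k unfolding S_def by auto
    have kmid: "k \<in> mid" using k(1) unfolding S_def by auto
    define h' where "h' x = h x - (t / L) * cvec q {0} (insert 1 S) x" for x
    have h'0: "h' 0 = 0" using less.prems(2) by (simp add: h'_def cvec_def)
    have h'1: "h' 1 = h 1 - 2 * t" using L_pos by (simp add: h'_def cvec_def L_def)
    have h'S: "h' i = h i - 2 * t" if "i \<in> S" for i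
      using that cvi[of i S] L_pos unfolding h'_def S_def by auto
    have h'nS: "h' i = h i - t" "2 * h i = h 1" if "i \<in> mid" "i \<notin> S" for i
    proof -
      show "h' i = h i - t" using that cvi[of i S] L_pos unfolding h'_def by auto
      have "h 1 \<le> 2 * h i" using less.prems(4) that(1) by blast
      moreover have "\<not> h 1 < 2 * h i" using that unfolding S_def by blast
      ultimately show "2 * h i = h 1" by linarith
    qed
    have hk1: "h k \<le> h 1" using less.prems(4) kmid by blast
    define N' where "N' = card {i\<in>mid. h' 1 < 2 * h' i}"
    have sub: "{i\<in>mid. h' 1 < 2 * h' i} \<subseteq> S - {k}"
    proof
      fix i assume i: "i \<in> {i\<in>mid. h' 1 < 2 * h' i}"
      show "i \<in> S - {k}"
      proof (cases "i \<in> S")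
        case True
        have "i \<noteq> k" using i h'S[OF k(1)] h'1 k(2) by auto
        thus ?thesis using True by simp
      next
        case False
        thus ?thesis using i h'nS[of i] h'1 by auto
      qed
    qed
    have "N' < N"
    proof -
      have "N' \<le> card (S - {k})" unfolding N'_def by (rule card_mono) (use finS sub in auto)
      also have "\<dots> < card S" using finS k(1) by (rule card_Diff1_less)
      finally show ?thesis using less.prems(1) unfolding S_def by simp
    qed
    moreover have "0 \<le> h' 1" using h'1 k hk1 by simp
    moreover have "\<forall>i\<in>mid. h' 1 \<le> 2 * h' i \<and> h' i \<le> h' 1"
    proof
      fix i assume i: "i \<in> mid"
      show "h' 1 \<le> 2 * h' i \<and> h' i \<le> h' 1"
      proof (cases "i \<in> S")
        case True thus ?thesis using h'S[OF True] h'1 tle[OF True] less.prems(4) i by auto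
      next
        case False thus ?thesis using h'nS[OF i False] h'1 t0 k(2) hk1 by auto
      qed
    qed
    ultimately have "entropic_closure n h'" using less.IH[OF _ N'_def[symmetric] h'0] by blast
    moreover have "entropic_closure n (\<lambda>x. (t / L) * cvec q {0} (insert 1 S) x)"
      by (rule gen_closure) (use t0 L_pos in simp)
    ultimately have "entropic_closure n (\<lambda>x. h' x + (t / L) * cvec q {0} (insert 1 S) x)"
      by (rule closure_add)
    thus ?thesis by (rule closure_cong) (simp add: h'_def)
  qed
qed

lemma reduced_case:
  assumes h0: "h 0 = 0" and R2: "\<forall>i\<in>Mn_carrier n. 0 \<le> h i \<and> h i \<le> h 1"
    and R3: "\<forall>i\<in>mid. \<forall>j\<in>mid. i \<noteq> j \<longrightarrow> h 1 \<le> h i + h j"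
  shows "entropic_closure n h"
proof (cases "\<forall>i\<in>mid. h 1 \<le> 2 * h i")
  case True
  show ?thesis by (rule half_case[where h = h, OF refl h0]) (use R2 C01 True in auto)
next
  case False
  then obtain k where k: "k \<in> mid" "\<not> h 1 \<le> 2 * h k" by blast
  hence k2: "2 * h k < h 1" by simp
  define d where "d = h 1 - 2 * h k"
  have d0: "d > 0" using k2 unfolding d_def by simp
  have hk0: "0 \<le> h k" using R2 k(1) by blast
  have cv: "cvec q {0, k} (UNIV - {0, k}) x = (if x \<in> {0, k} then 0 else 2 * L)" for x
    by (simp add: cvec_def L_def)
  define h'' where "h'' x = h x - (d / (2 * L)) * cvec q {0, k} (UNIV - {0, k}) x" for x
  have e0: "h'' 0 = 0" using h0 by (simp add: h''_def cv)
  have e1: "h'' 1 = 2 * h k" using L_pos k(1) by (simp add: h''_def cv d_def)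
  have ek: "h'' k = h k" by (simp add: h''_def cv)
  have ej: "h'' j = h j - d" if "j \<in> mid" "j \<noteq> k" for j using that L_pos by (simp add: h''_def cv)
  have "entropic_closure n h''"
  proof (rule half_case[where h = h'', OF refl e0])
    show "0 \<le> h'' 1" using e1 hk0 by simp
    show "\<forall>i\<in>mid. h'' 1 \<le> 2 * h'' i \<and> h'' i \<le> h'' 1"
    proof
      fix i assume i: "i \<in> mid"
      show "h'' 1 \<le> 2 * h'' i \<and> h'' i \<le> h'' 1"
      proof (cases "i = k")
        case True thus ?thesis using e1 ek hk0 by simp
      next
        case False
        have "h 1 \<le> h i + h k" using R3 i k(1) False by (metis add.commute)
        moreover have "h i \<le> h 1" using R2 i by blast
        ultimately show ?thesis using ej[OF i False] e1 unfolding d_def by simp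
      qed
    qed
  qed
  moreover have "entropic_closure n (\<lambda>x. (d / (2 * L)) * cvec q {0, k} (UNIV - {0, k}) x)"
    by (rule fk_closure) (use d0 L_pos k(1) in auto)
  ultimately have "entropic_closure n (\<lambda>x. h'' x + (d / (2 * L)) * cvec q {0, k} (UNIV - {0, k}) x)"
    by (rule closure_add)
  thus ?thesis by (rule closure_cong) (simp add: h''_def)
qed

lemma poly_closure:
  assumes P: "polymatroid n h"
  shows "entropic_closure n h"
proof -
  have nn: "\<forall>x\<in>Mn_carrier n. 0 \<le> h x"
    and mono: "\<forall>x\<in>Mn_carrier n. \<forall>y\<in>Mn_carrier n. Mn_le y x \<longrightarrow> h y \<le> h x"
    and sub: "\<forall>x\<in>Mn_carrier n. \<forall>y\<in>Mn_carrier n. h (Mn_join x y) + h (Mn_meet x y) \<le> h x + h y"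
    using P unfolding polymatroid_def by blast+
  define a where "a = h 0"
  have a0: "0 \<le> a" using nn C01 unfolding a_def by blast
  have cv: "cvec q {} UNIV x = 2 * L" for x by (simp add: cvec_def L_def)
  define h' where "h' x = h x - (a / (2 * L)) * cvec q {} UNIV x" for x
  have h'e: "h' x = h x - a" for x using L_pos by (simp add: h'_def cv)
  have "entropic_closure n h'"
  proof (rule reduced_case)
    show "h' 0 = 0" by (simp add: h'e a_def)
    show "\<forall>i\<in>Mn_carrier n. 0 \<le> h' i \<and> h' i \<le> h' 1"
    proof
      fix i assume i: "i \<in> Mn_carrier n"
      have "h 0 \<le> h i" using mono i C01 by (simp add: Mn_le_def)
      moreover have "h i \<le> h 1" using mono i C01 by (simp add: Mn_le_def)
      ultimately show "0 \<le> h' i \<and> h' i \<le> h' 1" by (simp add: h'e a_def)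
    qed
    show "\<forall>i\<in>mid. \<forall>j\<in>mid. i \<noteq> j \<longrightarrow> h' 1 \<le> h' i + h' j"
    proof (intro ballI impI)
      fix i j assume i: "i \<in> mid" and j: "j \<in> mid" and ij: "i \<noteq> j"
      have "Mn_join i j = 1" "Mn_meet i j = 0" using i j ij by (auto simp: Mn_join_def Mn_meet_def)
      hence "h 1 + h 0 \<le> h i + h j" using sub i j by force
      thus "h' 1 \<le> h' i + h' j" by (simp add: h'e a_def)
    qed
  qed
  moreover have "entropic_closure n (\<lambda>x. (a / (2 * L)) * cvec q {} UNIV x)"
    by (rule one_closure) (use a0 L_pos in auto)
  ultimately have "entropic_closure n (\<lambda>x. h' x + (a / (2 * L)) * cvec q {} UNIV x)"
    by (rule closure_add)
  thus ?thesis by (rule closure_cong) (simp add: h'_def)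
qed

end

theorem theorem6:
  fixes n :: nat
  assumes "n \<ge> 2"
  shows "Shannon_lattice_Mn n"
proof -
  obtain q :: nat where q: "prime q" "n < q" using bigger_prime by blast
  interpret setup_nq n q by unfold_locales (use assms q in auto)
  show ?thesis unfolding Shannon_lattice_Mn_def
    using poly_closure closure_polymatroid[OF assms] by blast
qed

end
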